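(* Let $q = p^l$ with $p$ prime and $l \geq 1$ an integer, and let $\mathbb{F}_q$ be the finite field with $q$ elements. Let $1 \leq k \leq m$ be integers and let $$Q(x_1,\ldots,x_m) = \sum_{I \subseteq \{1,\ldots,m\},\ \#I = k} \delta_I \prod_{i \in I} x_i,$$ where the coefficients $\delta_I \in \mathbb{F}_q$ are not all zero. Let $\mathcal{Z} = \{(y_1,\ldots,y_m) \in \mathbb{F}_q^m : Q(y_1,\ldots,y_m) = 0\}$ be the set of zeros of $Q$. Then $$q^{m-k}(q-1)^{k-1} \leq \#\mathcal{Z} \leq q^{m-k}\left(q^k - (q-1)^k\right).$$
   Context: In this paper, a "homogenous polynomial of degree $k$" in the variables $x_1,\ldots,x_m$ over $\mathbb{F}_q$ means a polynomial of the displayed form: an $\mathbb{F}_q$-linear combination, with not all coefficients zero, of the square-free monomials $\prod_{i \in I} x_i$ over subsets $I \subseteq \{1,\ldots,m\}$ of cardinality exactly $k$. $\#$ denotes cardinality. *)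

theory Defs
  imports "HOL-Library.FuncSet" "HOL-Library.Cardinality" "HOL-Computational_Algebra.Primes"
begin

definition hom_poly_eval :: "nat \<Rightarrow> nat \<Rightarrow> (nat set \<Rightarrow> 'a::comm_ring_1) \<Rightarrow> (nat \<Rightarrow> 'a) \<Rightarrow> 'a" where
  "hom_poly_eval m k \<delta> y = (\<Sum>I\<in>{I. I \<subseteq> {..<m} \<and> card I = k}. \<delta> I * (\<Prod>i\<in>I. y i))"

definition hom_poly_zeros :: "nat \<Rightarrow> nat \<Rightarrow> (nat set \<Rightarrow> 'a::comm_ring_1) \<Rightarrow> (nat \<Rightarrow> 'a) set" where
  "hom_poly_zeros m k \<delta> = {y \<in> {..<m} \<rightarrow>\<^sub>E (UNIV :: 'a set). hom_poly_eval m k \<delta> y = 0}"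

end

theory Submission
  imports Defs
begin

definition ev :: "nat \<Rightarrow> (nat set \<Rightarrow> 'a::comm_ring_1) \<Rightarrow> (nat \<Rightarrow> 'a) \<Rightarrow> 'a" where
  "ev m c y = (\<Sum>I\<in>Pow {..<m}. c I * (\<Prod>i\<in>I. y i))"

lemma ev_Suc:
  fixes c :: "nat set \<Rightarrow> 'a::comm_ring_1"
  shows "ev (Suc m) c (y(m:=x)) = x * ev m (\<lambda>I. c (insert m I)) y + ev m c y"
proof -
  have P: "Pow {..<Suc m} = Pow {..<m} \<union> insert m ` Pow {..<m}"
    by (simp add: lessThan_Suc Pow_insert)
  have D: "Pow {..<m} \<inter> insert m ` Pow {..<m} = {}" by auto
  have inj: "inj_on (insert m) (Pow {..<m})"
    by (rule inj_onI) (metis Pow_iff insert_ident lessThan_iff less_irrefl subsetD)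
  have A: "(\<Sum>I\<in>Pow {..<m}. c I * (\<Prod>i\<in>I. (y(m:=x)) i)) = ev m c y"
    unfolding ev_def
    by (rule sum.cong) (auto intro!: arg_cong[where f="\<lambda>t. c _ * t"] prod.cong)
  have B: "(\<Sum>I\<in>insert m ` Pow {..<m}. c I * (\<Prod>i\<in>I. (y(m:=x)) i))
      = x * ev m (\<lambda>I. c (insert m I)) y"
  proof -
    have "(\<Sum>I\<in>insert m ` Pow {..<m}. c I * (\<Prod>i\<in>I. (y(m:=x)) i))
        = (\<Sum>I\<in>Pow {..<m}. c (insert m I) * (\<Prod>i\<in>insert m I. (y(m:=x)) i))"
      by (simp add: sum.reindex[OF inj])
    also have "\<dots> = (\<Sum>I\<in>Pow {..<m}. x * (c (insert m I) * (\<Prod>i\<in>I. y i)))"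
    proof (rule sum.cong)
      fix I assume I: "I \<in> Pow {..<m}"
      then have fin: "finite I" and nm: "m \<notin> I" using finite_subset by auto
      have "(\<Prod>i\<in>insert m I. (y(m:=x)) i) = x * (\<Prod>i\<in>I. (y(m:=x)) i)"
        using fin nm by simp
      also have "(\<Prod>i\<in>I. (y(m:=x)) i) = (\<Prod>i\<in>I. y i)"
        using nm by (intro prod.cong) auto
      finally show "c (insert m I) * (\<Prod>i\<in>insert m I. (y(m:=x)) i) = x * (c (insert m I) * (\<Prod>i\<in>I. y i))"
        by (simp add: ac_simps)
    qed simp
    finally show ?thesis by (simp add: ev_def sum_distrib_left)
  qed
  show ?thesis
    unfolding ev_def[of "Suc m"] P
    by (subst sum.union_disjoint) (use D A B in \<open>auto simp: ev_def\<close>)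
qed

lemma count_Suc:
  fixes P :: "(nat \<Rightarrow> 'a::finite) \<Rightarrow> bool"
  shows "card {y \<in> {..<Suc m} \<rightarrow>\<^sub>E (UNIV::'a set). P y}
    = (\<Sum>y\<in>{..<m} \<rightarrow>\<^sub>E (UNIV::'a set). card {x. P (y(m:=x))})"
proof -
  let ?S = "SIGMA y:{..<m} \<rightarrow>\<^sub>E (UNIV::'a set). {x. P (y(m:=x))}"
  have "bij_betw (\<lambda>(y,x). y(m:=x)) ?S {y \<in> {..<Suc m} \<rightarrow>\<^sub>E (UNIV::'a set). P y}"
  proof (rule bij_betw_byWitness[where f'="\<lambda>y. (y(m:=undefined), y m)"])
    show "\<forall>a\<in>?S. (\<lambda>y. (y(m := undefined), y m)) ((\<lambda>(y, x). y(m := x)) a) = a"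
      by (auto simp: PiE_def extensional_def fun_eq_iff)
    show "\<forall>a\<in>{y \<in> {..<Suc m} \<rightarrow>\<^sub>E UNIV. P y}. (\<lambda>(y, x). y(m := x)) ((\<lambda>y. (y(m := undefined), y m)) a) = a"
      by auto
    show "(\<lambda>(y, x). y(m := x)) ` ?S \<subseteq> {y \<in> {..<Suc m} \<rightarrow>\<^sub>E UNIV. P y}"
      by (auto simp: PiE_def extensional_def)
    show "(\<lambda>y. (y(m := undefined), y m)) ` {y \<in> {..<Suc m} \<rightarrow>\<^sub>E UNIV. P y} \<subseteq> ?S"
      by (auto simp: PiE_def extensional_def)
  qed
  then have "card {y \<in> {..<Suc m} \<rightarrow>\<^sub>E (UNIV::'a set). P y} = card ?S"
    by (simp add: bij_betw_same_card)
  also have "\<dots> = (\<Sum>y\<in>{..<m} \<rightarrow>\<^sub>E (UNIV::'a set). card {x. P (y(m:=x))})"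
    by (rule card_SigmaI) (auto intro: finite_PiE)
  finally show ?thesis .
qed

lemma lin_nz:
  fixes a b :: "'a::{field,finite}"
  assumes "a \<noteq> 0"
  shows "card {x. x * a + b \<noteq> 0} = CARD('a) - 1" and "card {x. x * a + b = 0} = 1"
proof -
  have e: "{x. x * a + b = 0} = {- b / a}" using assms
    by (auto simp: field_simps eq_neg_iff_add_eq_0)
  then show "card {x. x * a + b = 0} = 1" by simp
  have "{x. x * a + b \<noteq> 0} = UNIV - {- b / a}" using e by blast
  then show "card {x. x * a + b \<noteq> 0} = CARD('a) - 1"
    by (simp add: card_Diff_subset)
qed

lemma sum_lb:
  fixes f :: "'b \<Rightarrow> nat"
  assumes "finite S" "\<And>y. y \<in> S \<Longrightarrow> Q y \<Longrightarrow> g \<le> f y"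
  shows "card {y\<in>S. Q y} * g \<le> sum f S"
proof -
  have "card {y\<in>S. Q y} * g \<le> sum f {y\<in>S. Q y}"
    using sum_bounded_below[of "{y\<in>S. Q y}" g f] assms by auto
  also have "\<dots> \<le> sum f S" by (rule sum_mono2) (use assms in auto)
  finally show ?thesis .
qed

lemma NZ:
  fixes c :: "nat set \<Rightarrow> 'a::{field,finite}"
  assumes "\<exists>I\<subseteq>{..<m}. c I \<noteq> 0" "\<forall>I\<subseteq>{..<m}. d < card I \<longrightarrow> c I = 0" "d \<le> m"
  shows "(CARD('a) - 1) ^ d * CARD('a) ^ (m - d) \<le> card {y \<in> {..<m} \<rightarrow>\<^sub>E (UNIV::'a set). ev m c y \<noteq> 0}"
  using assms
proof (induction m arbitrary: c d)
  case 0
  then have "c {} \<noteq> 0" "d = 0" by auto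
  then show ?case by (simp add: ev_def)
next
  case (Suc m)
  let ?q = "CARD('a)"
  let ?A = "\<lambda>I. c (insert m I)"
  let ?PE = "{..<m} \<rightarrow>\<^sub>E (UNIV::'a set)"
  have cnt: "card {y \<in> {..<Suc m} \<rightarrow>\<^sub>E (UNIV::'a set). ev (Suc m) c y \<noteq> 0}
      = (\<Sum>y\<in>?PE. card {x. x * ev m ?A y + ev m c y \<noteq> 0})"
    by (simp add: count_Suc ev_Suc)
  show ?case
  proof (cases "\<exists>I\<subseteq>{..<m}. ?A I \<noteq> 0")
    case True
    then obtain I where I: "I \<subseteq> {..<m}" "?A I \<noteq> 0" by blast
    have fI: "finite I" using I finite_subset by auto
    have "m \<notin> I" using I by auto
    then have "card (insert m I) = Suc (card I)" using fI by simp
    moreover have "insert m I \<subseteq> {..<Suc m}" using I by auto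
    ultimately have d1: "1 \<le> d"
    proof -
      assume a1: "card (insert m I) = Suc (card I)" and a2: "insert m I \<subseteq> {..<Suc m}"
      show "1 \<le> d"
      proof (rule ccontr)
        assume "\<not> 1 \<le> d"
        then have "d < card (insert m I)" using a1 by simp
        then show False using Suc.prems(2) a2 I(2) by blast
      qed
    qed
    have degA: "\<forall>J\<subseteq>{..<m}. d - 1 < card J \<longrightarrow> ?A J = 0"
    proof (intro allI impI)
      fix J assume J: "J \<subseteq> {..<m}" "d - 1 < card J"
      have fJ: "finite J" using J finite_subset by auto
      have "m \<notin> J" using J by auto
      then have "card (insert m J) = Suc (card J)" using fJ by simp
      moreover have "insert m J \<subseteq> {..<Suc m}" using J by auto
      moreover have "d < Suc (card J)" using J d1 by auto
      ultimately show "?A J = 0" using Suc.prems(2) by metis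
    qed
    have IH: "(?q - 1) ^ (d - 1) * ?q ^ (m - (d - 1)) \<le> card {y \<in> ?PE. ev m ?A y \<noteq> 0}"
      using Suc.IH[of ?A "d - 1"] True degA Suc.prems(3) d1 by auto
    have L: "card {y \<in> ?PE. ev m ?A y \<noteq> 0} * (?q - 1) \<le> (\<Sum>y\<in>?PE. card {x. x * ev m ?A y + ev m c y \<noteq> 0})"
      by (rule sum_lb) (simp_all add: lin_nz finite_PiE)
    have "(?q - 1) ^ d * ?q ^ (Suc m - d) = ((?q - 1) ^ (d - 1) * ?q ^ (m - (d - 1))) * (?q - 1)"
      using d1 Suc.prems(3) by (cases d) (auto simp: Suc_diff_le)
    also have "\<dots> \<le> card {y \<in> ?PE. ev m ?A y \<noteq> 0} * (?q - 1)"
      by (rule mult_le_mono1[OF IH])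
    also note L
    also note cnt[symmetric]
    finally show ?thesis .
  next
    case False
    then have A0: "\<And>y. ev m ?A y = 0" by (simp add: ev_def)
    obtain I where I: "I \<subseteq> {..<Suc m}" "c I \<noteq> 0" using Suc.prems(1) by blast
    have "I \<subseteq> {..<m}"
    proof (rule ccontr)
      assume "\<not> I \<subseteq> {..<m}"
      then have "m \<in> I" using I by (auto simp: less_Suc_eq)
      then have "?A (I - {m}) \<noteq> 0" using I by (simp add: insert_absorb)
      moreover have "I - {m} \<subseteq> {..<m}" using I by (auto simp: less_Suc_eq)
      ultimately show False using False by blast
    qed
    define d' where "d' = min d m"
    have deg: "\<forall>J\<subseteq>{..<m}. d' < card J \<longrightarrow> c J = 0"
    proof (intro allI impI)
      fix J assume J: "J \<subseteq> {..<m}" "d' < card J"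
      have "card J \<le> m" using card_mono[OF _ J(1)] by simp
      then have "d < card J" using J d'_def by auto
      moreover have "J \<subseteq> {..<Suc m}" using J by auto
      ultimately show "c J = 0" using Suc.prems(2) by blast
    qed
    have IH: "(?q - 1) ^ d' * ?q ^ (m - d') \<le> card {y \<in> ?PE. ev m c y \<noteq> 0}"
      using Suc.IH[of c d'] deg \<open>I \<subseteq> {..<m}\<close> I d'_def by auto
    have L: "card {y \<in> ?PE. ev m c y \<noteq> 0} * ?q \<le> (\<Sum>y\<in>?PE. card {x. x * ev m ?A y + ev m c y \<noteq> 0})"
      by (rule sum_lb) (simp_all add: A0 finite_PiE)
    have "(?q - 1) ^ d * ?q ^ (Suc m - d) \<le> ((?q - 1) ^ d' * ?q ^ (m - d')) * ?q"
    proof (cases "d \<le> m")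
      case True then show ?thesis by (simp add: d'_def Suc_diff_le)
    next
      case False
      then have "d = Suc m" "d' = m" using Suc.prems(3) d'_def by auto
      then show ?thesis by simp
    qed
    also have "\<dots> \<le> card {y \<in> ?PE. ev m c y \<noteq> 0} * ?q"
      by (rule mult_le_mono1[OF IH])
    also note L
    also note cnt[symmetric]
    finally show ?thesis .
  qed
qed

lemma ZL:
  fixes c :: "nat set \<Rightarrow> 'a::{field,finite}"
  assumes "\<exists>I\<subseteq>{..<m}. c I \<noteq> 0" "\<forall>I\<subseteq>{..<m}. c I \<noteq> 0 \<longrightarrow> card I = k" "1 \<le> k" "k \<le> m"
  shows "CARD('a) ^ (m - k) * (CARD('a) - 1) ^ (k - 1) \<le> card {y \<in> {..<m} \<rightarrow>\<^sub>E (UNIV::'a set). ev m c y = 0}"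
  using assms
proof (induction m arbitrary: c)
  case 0
  then show ?case by simp
next
  case (Suc m)
  let ?q = "CARD('a)"
  let ?A = "\<lambda>I. c (insert m I)"
  let ?PE = "{..<m} \<rightarrow>\<^sub>E (UNIV::'a set)"
  have cnt: "card {y \<in> {..<Suc m} \<rightarrow>\<^sub>E (UNIV::'a set). ev (Suc m) c y = 0}
      = (\<Sum>y\<in>?PE. card {x. x * ev m ?A y + ev m c y = 0})"
    by (simp add: count_Suc ev_Suc)
  show ?case
  proof (cases "\<exists>I\<subseteq>{..<m}. ?A I \<noteq> 0")
    case True
    have degA: "\<forall>J\<subseteq>{..<m}. k - 1 < card J \<longrightarrow> ?A J = 0"
    proof (intro allI impI)
      fix J assume J: "J \<subseteq> {..<m}" "k - 1 < card J"
      have fJ: "finite J" using J finite_subset by auto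
      have "m \<notin> J" using J by auto
      then have "card (insert m J) = Suc (card J)" using fJ by simp
      moreover have "insert m J \<subseteq> {..<Suc m}" using J by auto
      ultimately show "?A J = 0"
      proof -
        assume a1: "card (insert m J) = Suc (card J)" and a2: "insert m J \<subseteq> {..<Suc m}"
        show "?A J = 0"
        proof (rule ccontr)
          assume "?A J \<noteq> 0"
          then have "card (insert m J) = k" using Suc.prems(2) a2 by blast
          then show False using a1 J(2) by simp
        qed
      qed
    qed
    have NZA: "(?q - 1) ^ (k - 1) * ?q ^ (m - (k - 1)) \<le> card {y \<in> ?PE. ev m ?A y \<noteq> 0}"
      using NZ[of m ?A "k - 1", OF True degA] Suc.prems(3,4) by simp
    have L: "card {y \<in> ?PE. ev m ?A y \<noteq> 0} * 1 \<le> (\<Sum>y\<in>?PE. card {x. x * ev m ?A y + ev m c y = 0})"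
      by (rule sum_lb) (simp_all add: lin_nz finite_PiE)
    have e: "m - (k - 1) = Suc m - k" using Suc.prems by auto
    have "?q ^ (Suc m - k) * (?q - 1) ^ (k - 1) = (?q - 1) ^ (k - 1) * ?q ^ (m - (k - 1))"
      by (simp only: e mult.commute)
    also note NZA
    also have "card {y \<in> ?PE. ev m ?A y \<noteq> 0} = card {y \<in> ?PE. ev m ?A y \<noteq> 0} * 1" by simp
    also note L
    also note cnt[symmetric]
    finally show ?thesis .
  next
    case False
    then have A0: "\<And>y. ev m ?A y = 0" by (simp add: ev_def)
    obtain I where I: "I \<subseteq> {..<Suc m}" "c I \<noteq> 0" using Suc.prems(1) by blast
    have Im: "I \<subseteq> {..<m}"
    proof (rule ccontr)
      assume "\<not> I \<subseteq> {..<m}"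
      then have "m \<in> I" using I by (auto simp: less_Suc_eq)
      then have "?A (I - {m}) \<noteq> 0" using I by (simp add: insert_absorb)
      moreover have "I - {m} \<subseteq> {..<m}" using I by (auto simp: less_Suc_eq)
      ultimately show False using False by blast
    qed
    have "card I = k" using Suc.prems(2) I by blast
    then have km: "k \<le> m" using card_mono[OF _ Im] by simp
    have IH: "?q ^ (m - k) * (?q - 1) ^ (k - 1) \<le> card {y \<in> ?PE. ev m c y = 0}"
    proof -
      have h2: "\<forall>I\<subseteq>{..<m}. c I \<noteq> 0 \<longrightarrow> card I = k" using Suc.prems(2) by (meson lessThan_subset_iff le_SucI order_refl subset_trans)
      show ?thesis using Suc.IH[OF _ h2 Suc.prems(3) km] Im I by blast
    qed
    have L: "card {y \<in> ?PE. ev m c y = 0} * ?q \<le> (\<Sum>y\<in>?PE. card {x. x * ev m ?A y + ev m c y = 0})"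
      by (rule sum_lb) (simp_all add: A0 finite_PiE)
    have e: "Suc m - k = Suc (m - k)" using km by auto
    have "?q ^ (Suc m - k) * (?q - 1) ^ (k - 1) = (?q ^ (m - k) * (?q - 1) ^ (k - 1)) * ?q"
      by (simp only: e power_Suc mult_ac)
    also have "\<dots> \<le> card {y \<in> ?PE. ev m c y = 0} * ?q"
      by (rule mult_le_mono1[OF IH])
    also note L
    also note cnt[symmetric]
    finally show ?thesis .
  qed
qed

theorem theorem1:
  fixes \<delta> :: "nat set \<Rightarrow> 'a::{field,finite}"
    and p l q m k :: nat
  assumes "prime p" and "l \<ge> 1" and "q = p ^ l" and "CARD('a) = q"
    and "1 \<le> k" and "k \<le> m"
    and "\<exists>I. I \<subseteq> {..<m} \<and> card I = k \<and> \<delta> I \<noteq> 0"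
  shows "q ^ (m - k) * (q - 1) ^ (k - 1) \<le> card (hom_poly_zeros m k \<delta>)
    \<and> card (hom_poly_zeros m k \<delta>) \<le> q ^ (m - k) * (q ^ k - (q - 1) ^ k)"
proof -
  define c where "c I = (if card I = k then \<delta> I else 0)" for I
  let ?PE = "{..<m} \<rightarrow>\<^sub>E (UNIV::'a set)"
  have ev_eq: "hom_poly_eval m k \<delta> y = ev m c y" for y
  proof -
    have "ev m c y = (\<Sum>I\<in>{I \<in> Pow {..<m}. card I = k}. \<delta> I * (\<Prod>i\<in>I. y i))"
    proof -
      have "ev m c y = (\<Sum>I\<in>Pow {..<m}. if card I = k then \<delta> I * (\<Prod>i\<in>I. y i) else 0)"
        unfolding ev_def c_def by (rule sum.cong) auto
      also have "\<dots> = (\<Sum>I\<in>{I \<in> Pow {..<m}. card I = k}. \<delta> I * (\<Prod>i\<in>I. y i))"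
        by (rule sum.mono_neutral_cong_right) auto
      finally show ?thesis .
    qed
    also have "{I \<in> Pow {..<m}. card I = k} = {I. I \<subseteq> {..<m} \<and> card I = k}" by auto
    finally show ?thesis by (simp add: hom_poly_eval_def)
  qed
  have Z: "hom_poly_zeros m k \<delta> = {y \<in> ?PE. ev m c y = 0}"
    by (simp add: hom_poly_zeros_def ev_eq)
  have ex: "\<exists>I\<subseteq>{..<m}. c I \<noteq> 0" using assms(7) c_def by auto
  have hom: "\<forall>I\<subseteq>{..<m}. c I \<noteq> 0 \<longrightarrow> card I = k" by (simp add: c_def)
  have low: "q ^ (m - k) * (q - 1) ^ (k - 1) \<le> card (hom_poly_zeros m k \<delta>)"
    using ZL[OF ex hom assms(5,6)] Z assms(4) by simp
  have deg: "\<forall>I\<subseteq>{..<m}. k < card I \<longrightarrow> c I = 0" by (simp add: c_def)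
  have nz: "(q - 1) ^ k * q ^ (m - k) \<le> card {y \<in> ?PE. ev m c y \<noteq> 0}"
    using NZ[OF ex deg assms(6)] assms(4) by simp
  have fin: "finite ?PE" by (auto intro: finite_PiE)
  have tot: "card {y \<in> ?PE. ev m c y = 0} + card {y \<in> ?PE. ev m c y \<noteq> 0} = q ^ m"
  proof -
    have "card {y \<in> ?PE. ev m c y = 0} + card {y \<in> ?PE. ev m c y \<noteq> 0} = card ?PE"
      using fin by (subst card_Un_disjoint[symmetric]) (auto intro: arg_cong[where f=card])
    also have "\<dots> = q ^ m" by (simp add: card_PiE assms(4))
    finally show ?thesis .
  qed
  have qm: "q ^ (m - k) * q ^ k = q ^ m" using assms(6) by (simp add: power_add[symmetric])
  have up: "card (hom_poly_zeros m k \<delta>) \<le> q ^ (m - k) * (q ^ k - (q - 1) ^ k)"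
    using tot nz qm unfolding Z by (simp add: diff_mult_distrib2 mult.commute)
  show ?thesis using low up by simp
qed

end
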